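(* (1) With $\mathbf a=v\mathbf c$, the function $$\tilde G(\mathbf a,v)=\sum_{k=1}^N\Big(a_k\big(\ln\tfrac{a_k}{v c_k^{\rm e}}-1+q_k\big)+vc_k^{\rm e}\Big)+A\Big(\ln\tfrac{A}{v}-1\Big),\qquad (\mathbf a,v)\in[0,\infty)^N\times(0,\infty)$$ (with $0\ln 0=0$) has positive definite Hessian at every point of $(0,\infty)^{N+1}$, and is convex. (2) Suppose $f(\phi_{\min})<0$ and let $(\mathbf c^*,v^*,\phi^* )$ be the unique steady state of the linear pump-leak system. Then $(\mathbf c^*,v^* )$ is the unique minimizer of $\tilde G(\mathbf c,v)=v\sum_k\big(c_k(\ln(c_k/c_k^{\rm e})-1+q_k)+c_k^{\rm e}\big)+A(\ln(A/v)-1)$ over the set $\overline{\mathcal S}=\{(\mathbf c,v)\in[0,\infty)^N\times(0,\infty):\sum_kz_kc_k+zA/v=0\}$.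
   Context: Fix an integer $N\ge2$, real valences $z_1,\dots,z_N$ not all zero, positive constants $c_k^{\rm e}$ with $\sum_kz_kc_k^{\rm e}=0$, $A>0$, $z\in\mathbb R$. Let $L$ be a real symmetric positive definite $N\times N$ matrix, $\mathbf p\in\mathbb R^N$ constant, $\zeta>0$, $\mathbf q=(q_k)=L^{-1}\mathbf p$, and $f(\phi)=\sum_kc_k^{\rm e}(\exp(-q_k-z_k\phi)-1)$, which has a unique minimizer $\phi_{\min}$ on $\mathbb R$. For $\mathbf c\in(0,\infty)^N$, $v>0$, $\phi\in\mathbb R$: $\mu_k=\ln(c_k/c_k^{\rm e})+z_k\phi$, $\pi_{\rm w}=\sum_kc_k^{\rm e}-(\sum_kc_k+A/v)$. The linear pump-leak system is $\frac{d}{dt}(v\mathbf c)=-L\boldsymbol\mu-\mathbf p$, $0=\sum_kz_kc_k+zA/v$, $\frac{dv}{dt}=-\zeta\pi_{\rm w}$; a steady state is a point $(\mathbf c,v,\phi)\in(0,\infty)^N\times(0,\infty)\times\mathbb R$ with the constraint holding, $L\boldsymbol\mu+\mathbf p=0$ and $\pi_{\rm w}=0$; when $f(\phi_{\min})<0$ it exists and is unique. *)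

theory Defs
  imports "HOL-Analysis.Analysis"
begin

text \<open>Species are indexed by a finite type 'n (N = CARD('n)); vectors in R^N are real^'n.\<close>

definition hessian_pos_def_at :: "('a::real_normed_vector \<Rightarrow> real) \<Rightarrow> 'a \<Rightarrow> bool" where
  "hessian_pos_def_at f x \<longleftrightarrow>
     (\<exists>Df :: 'a \<Rightarrow> ('a \<Rightarrow>\<^sub>L real). \<exists>D2f :: 'a \<Rightarrow> ('a \<Rightarrow>\<^sub>L real).
        (\<forall>\<^sub>F y in nhds x. (f has_derivative blinfun_apply (Df y)) (at y)) \<and>
        (Df has_derivative D2f) (at x) \<and>
        (\<forall>h. h \<noteq> 0 \<longrightarrow> blinfun_apply (D2f h) h > 0))"

definition Gt_a :: "real^'n \<Rightarrow> real^'n \<Rightarrow> real \<Rightarrow> ((real^'n) \<times> real) \<Rightarrow> real" where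
  "Gt_a ce q A av = (let a = fst av; v = snd av in
     (\<Sum>k\<in>UNIV. a$k * (ln (a$k / (v * ce$k)) - 1 + q$k) + v * ce$k) + A * (ln (A / v) - 1))"

definition Gt_c :: "real^'n \<Rightarrow> real^'n \<Rightarrow> real \<Rightarrow> real^'n \<Rightarrow> real \<Rightarrow> real" where
  "Gt_c ce q A c v =
     v * (\<Sum>k\<in>UNIV. c$k * (ln (c$k / ce$k) - 1 + q$k) + ce$k) + A * (ln (A / v) - 1)"

definition Sbar :: "real^'n \<Rightarrow> real \<Rightarrow> real \<Rightarrow> ((real^'n) \<times> real) set" where
  "Sbar zv z A = {(c, v). (\<forall>k. c$k \<ge> 0) \<and> v > 0 \<and> (\<Sum>k\<in>UNIV. zv$k * c$k) + z * A / v = 0}"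

definition mu :: "real^'n \<Rightarrow> real^'n \<Rightarrow> real^'n \<Rightarrow> real \<Rightarrow> real^'n" where
  "mu zv ce c phi = (\<chi> k. ln (c$k / ce$k) + zv$k * phi)"

definition pi_w :: "real^'n \<Rightarrow> real \<Rightarrow> real^'n \<Rightarrow> real \<Rightarrow> real" where
  "pi_w ce A c v = (\<Sum>k\<in>UNIV. ce$k) - ((\<Sum>k\<in>UNIV. c$k) + A / v)"

definition steady_state ::
  "real^'n \<Rightarrow> real^'n \<Rightarrow> real \<Rightarrow> real \<Rightarrow> real^'n^'n \<Rightarrow> real^'n \<Rightarrow> real^'n \<Rightarrow> real \<Rightarrow> real \<Rightarrow> bool" where
  "steady_state zv ce A z L p c v phi \<longleftrightarrow>
     (\<forall>k. c$k > 0) \<and> v > 0 \<and>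
     (\<Sum>k\<in>UNIV. zv$k * c$k) + z * A / v = 0 \<and>
     L *v mu zv ce c phi + p = 0 \<and>
     pi_w ce A c v = 0"

definition f_fun :: "real^'n \<Rightarrow> real^'n \<Rightarrow> real^'n \<Rightarrow> real \<Rightarrow> real" where
  "f_fun zv ce q phi = (\<Sum>k\<in>UNIV. ce$k * (exp (- q$k - zv$k * phi) - 1))"

end

theory Submission
  imports Defs
begin


lemma xlog_ge: fixes x y :: real assumes "x \<ge> 0" "y > 0"
  shows "x * ln (x / y) - x + y \<ge> 0"
proof (cases "x = 0")
  case True then show ?thesis using assms by simp
next
  case False
  then have x: "x > 0" using assms by simp
  have "ln y - ln x \<le> (y - x) / x" using ln_diff_le x assms by simp
  then have "x * (ln y - ln x) \<le> y - x" using x by (simp add: field_simps)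
  then show ?thesis using x assms by (simp add: ln_div algebra_simps)
qed

lemma xlog_gt: fixes x y :: real assumes "x \<ge> 0" "y > 0" "x \<noteq> y"
  shows "x * ln (x / y) - x + y > 0"
proof (cases "x = 0")
  case True then show ?thesis using assms by simp
next
  case False
  then have x: "x > 0" using assms by simp
  have "ln y - ln x < (y - x) / x" using ln_diff_less x assms by simp
  then have "x * (ln y - ln x) < y - x" using x by (simp add: field_simps)
  then show ?thesis using x assms by (simp add: ln_div algebra_simps)
qed

lemma mlog_gt: fixes v w :: real assumes "v > 0" "w > 0" "v \<noteq> w"
  shows "v / w - 1 - ln (v / w) > 0"
proof -
  have "ln v - ln w < (v - w) / w" using ln_diff_less assms by simp
  then show ?thesis using assms by (simp add: ln_div diff_divide_distrib)
qed

lemma support: fixes x w m W :: real assumes "x \<ge> 0" "w > 0" "m > 0" "W > 0"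
  shows "x * ln (x / w) \<ge> x * ln (m / W) + x - m * w / W"
proof -
  have "(x * ln (x / (w * m / W)) - x + w * m / W) \<ge> 0"
    by (rule xlog_ge) (use assms in auto)
  moreover have "x * ln (x / (w * m / W)) = x * ln (x / w) - x * ln (m / W)"
  proof (cases "x = 0")
    case False
    then have "x > 0" using assms by simp
    then show ?thesis using assms by (simp add: ln_div ln_mult algebra_simps)
  qed simp
  ultimately show ?thesis by (simp add: algebra_simps)
qed

lemma persp: fixes a b w1 w2 u t :: real
  assumes "a \<ge> 0" "b \<ge> 0" "w1 > 0" "w2 > 0" "u \<ge> 0" "t \<ge> 0" "u + t = 1"
  shows "(u*a+t*b) * ln ((u*a+t*b)/(u*w1+t*w2)) \<le> u*(a*ln(a/w1)) + t*(b*ln(b/w2))"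
proof -
  define m where "m = u*a+t*b"
  define W where "W = u*w1+t*w2"
  have W: "W > 0"
  proof (cases "u = 0")
    case True then show ?thesis unfolding W_def using assms by simp
  next
    case False then have "u*w1 > 0" using assms by simp
    moreover have "t*w2 \<ge> 0" using assms by simp
    ultimately show ?thesis unfolding W_def by linarith
  qed
  have m0: "m \<ge> 0" unfolding m_def using assms by simp
  show ?thesis
  proof (cases "m = 0")
    case True
    then have "u*a = 0" "t*b = 0" unfolding m_def using assms
      by (smt (verit) mult_nonneg_nonneg)+
    then have "u*(a*ln(a/w1)) = 0" "t*(b*ln(b/w2)) = 0"
      by (metis mult.assoc mult_zero_left)+
    moreover have "(u*a+t*b) * ln ((u*a+t*b)/(u*w1+t*w2)) = 0" using True m_def by simp
    ultimately show ?thesis by linarith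
  next
    case False
    then have m: "m > 0" using m0 by simp
    have 1: "a * ln (a / w1) \<ge> a * ln (m / W) + a - m * w1 / W"
      by (rule support) (use assms m W in auto)
    have 2: "b * ln (b / w2) \<ge> b * ln (m / W) + b - m * w2 / W"
      by (rule support) (use assms m W in auto)
    have "u*(a*ln(a/w1)) + t*(b*ln(b/w2)) \<ge> u*(a * ln (m / W) + a - m * w1 / W) + t*(b * ln (m / W) + b - m * w2 / W)"
      using 1 2 assms by (simp add: add_mono mult_left_mono)
    also have "u*(a * ln (m / W) + a - m * w1 / W) + t*(b * ln (m / W) + b - m * w2 / W)
       = m * ln (m/W) + m - m * W / W" unfolding m_def W_def by (simp add: algebra_simps add_divide_distrib)
    also have "\<dots> = m * ln (m/W)" using W by simp
    finally show ?thesis unfolding m_def W_def .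
  qed
qed

lemma convex_S: "convex {(a::real^'n, v::real). (\<forall>k. a$k \<ge> 0) \<and> v > 0}"
proof (rule convexI)
  fix x y :: "(real^'n) \<times> real" and u t :: real
  assume x: "x \<in> {(a, v). (\<forall>k. a$k \<ge> 0) \<and> v > 0}" and y: "y \<in> {(a, v). (\<forall>k. a$k \<ge> 0) \<and> v > 0}"
    and u: "0 \<le> u" and t: "0 \<le> t" and ut: "u + t = 1"
  obtain a1 v1 where x1: "x = (a1, v1)" by (cases x)
  obtain a2 v2 where y1: "y = (a2, v2)" by (cases y)
  have "u* v1 + t* v2 > 0"
  proof (cases "u = 0")
    case True then show ?thesis using ut y y1 by simp
  next
    case False then have "u* v1 > 0" using u x x1 by simp
    moreover have "t* v2 \<ge> 0" using t y y1 by simp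
    ultimately show ?thesis by linarith
  qed
  moreover have "\<forall>k. (u *\<^sub>R a1 + t *\<^sub>R a2)$k \<ge> 0" using x y x1 y1 u t by simp
  ultimately show "u *\<^sub>R x + t *\<^sub>R y \<in> {(a, v). (\<forall>k. a$k \<ge> 0) \<and> v > 0}"
    using x1 y1 by simp
qed

lemma convex_Gt:
  fixes ce q :: "real^'n" and A :: real
  assumes ce_pos: "\<forall>k. ce$k > 0" and A_pos: "A > 0"
  shows "convex_on {(a, v). (\<forall>k. a$k \<ge> 0) \<and> v > 0} (Gt_a ce q A)"
  unfolding convex_on_def
proof (intro conjI ballI allI impI convex_S)
  fix x y :: "(real^'n) \<times> real" and u t :: real
  assume x: "x \<in> {(a, v). (\<forall>k. a$k \<ge> 0) \<and> v > 0}" and y: "y \<in> {(a, v). (\<forall>k. a$k \<ge> 0) \<and> v > 0}"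
    and u: "0 \<le> u" and t: "0 \<le> t" and ut: "u + t = 1"
  obtain a1 v1 where x1: "x = (a1, v1)" by (cases x)
  obtain a2 v2 where y1: "y = (a2, v2)" by (cases y)
  have a1: "\<forall>k. a1$k \<ge> 0" and v1: "v1 > 0" using x x1 by auto
  have a2: "\<forall>k. a2$k \<ge> 0" and v2: "v2 > 0" using y y1 by auto
  define F where "F = (\<lambda>k (a::real^'n) v. a$k * (ln (a$k / (v * ce$k)) - 1 + q$k) + v * ce$k)"
  define H where "H = (\<lambda>v::real. A * (ln (A / v) - 1))"
  have G: "Gt_a ce q A (a, v) = (\<Sum>k\<in>UNIV. F k a v) + H v" for a v
    unfolding Gt_a_def F_def H_def by simp
  have comb: "u *\<^sub>R x + t *\<^sub>R y = (u *\<^sub>R a1 + t *\<^sub>R a2, u* v1+t* v2)" using x1 y1 by simp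
  have Fk: "F k (u *\<^sub>R a1 + t *\<^sub>R a2) (u* v1+t* v2) \<le> u * F k a1 v1 + t * F k a2 v2" for k
  proof -
    have ce: "ce$k > 0" using ce_pos by simp
    have p: "(u*a1$k+t*a2$k) * ln ((u*a1$k+t*a2$k)/(u*(v1*ce$k)+t*(v2*ce$k)))
         \<le> u*(a1$k*ln(a1$k/(v1*ce$k))) + t*(a2$k*ln(a2$k/(v2*ce$k)))"
      by (rule persp) (use a1 a2 v1 v2 ce u t ut in auto)
    have e: "u*(v1*ce$k)+t*(v2*ce$k) = (u* v1+t* v2)*ce$k" by (simp add: algebra_simps)
    show ?thesis using p unfolding F_def e by (simp add: algebra_simps)
  qed
  have Hv: "H (u* v1+t* v2) \<le> u * H v1 + t * H v2"
  proof -
    have p: "(u*A+t*A) * ln ((u*A+t*A)/(u* v1+t* v2)) \<le> u*(A*ln(A/v1)) + t*(A*ln(A/v2))"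
      by (rule persp) (use A_pos v1 v2 u t ut in auto)
    have e: "u*A+t*A = A" using ut by (metis distrib_right mult_1)
    have "u * H v1 + t * H v2 = u*(A*ln(A/v1)) + t*(A*ln(A/v2)) - (u*A+t*A)"
      unfolding H_def by (simp add: algebra_simps)
    then show ?thesis using p unfolding e H_def by (simp add: right_diff_distrib)
  qed
  have "(\<Sum>k\<in>UNIV. F k (u *\<^sub>R a1 + t *\<^sub>R a2) (u* v1+t* v2)) \<le> (\<Sum>k\<in>UNIV. u * F k a1 v1 + t * F k a2 v2)"
    by (rule sum_mono) (rule Fk)
  also have "\<dots> = u * (\<Sum>k\<in>UNIV. F k a1 v1) + t * (\<Sum>k\<in>UNIV. F k a2 v2)"
    by (simp add: sum.distrib sum_distrib_left)
  finally show "Gt_a ce q A (u *\<^sub>R x + t *\<^sub>R y) \<le> u * Gt_a ce q A x + t * Gt_a ce q A y"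
    unfolding comb x1 y1 using Hv G[of "u *\<^sub>R a1 + t *\<^sub>R a2" "u * v1 + t * v2"] G[of a1 v1] G[of a2 v2]
    by (simp add: algebra_simps)
qed

lemma mu_eq:
  fixes L :: "real^'n^'n" and m p :: "real^'n"
  assumes L_pd: "\<forall>x. x \<noteq> 0 \<longrightarrow> x \<bullet> (L *v x) > 0"
    and eq: "L *v m + p = 0"
  shows "m = - (matrix_inv L *v p)"
proof -
  have "\<forall>x. L *v x = 0 \<longrightarrow> x = 0" using L_pd by force
  then obtain B where B: "B ** L = mat 1" using matrix_left_invertible_ker by blast
  then have "L ** B = mat 1" using matrix_left_right_inverse by blast
  then have "L ** matrix_inv L = mat 1 \<and> matrix_inv L ** L = mat 1"
    unfolding matrix_inv_def using B by (rule someI[where x = B, OF conjI])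
  then have inv: "matrix_inv L ** L = mat 1" by blast
  have "L *v m = - p" using eq by (simp add: eq_neg_iff_add_eq_0)
  then have "matrix_inv L *v (L *v m) = matrix_inv L *v (- p)" by simp
  moreover have "matrix_inv L *v (- p) = - (matrix_inv L *v p)"
    by (simp add: matrix_vector_mult_def vec_eq_iff sum_negf)
  ultimately show ?thesis by (simp add: matrix_vector_mul_assoc inv)
qed

lemma part2:
  fixes zv ce p q cs :: "real^'n" and L :: "real^'n^'n" and A z vs phis :: real
  assumes ce_pos: "\<forall>k. ce$k > 0" and A_pos: "A > 0"
    and L_pd: "\<forall>x. x \<noteq> 0 \<longrightarrow> x \<bullet> (L *v x) > 0"
    and qdef: "q = matrix_inv L *v p"
    and ss: "steady_state zv ce A z L p cs vs phis"
  shows "(cs, vs) \<in> Sbar zv z A \<and>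
        (\<forall>c v. (c, v) \<in> Sbar zv z A \<and> (c, v) \<noteq> (cs, vs) \<longrightarrow>
                Gt_c ce q A cs vs < Gt_c ce q A c v)"
proof -
  have cs: "\<forall>k. cs$k > 0" and vs: "vs > 0"
    and con: "(\<Sum>k\<in>UNIV. zv$k * cs$k) + z * A / vs = 0"
    and Lm: "L *v mu zv ce cs phis + p = 0" and pw: "pi_w ce A cs vs = 0"
    using ss unfolding steady_state_def by auto
  have m: "mu zv ce cs phis = - q" using mu_eq[OF L_pd Lm] qdef by simp
  have lk: "ln (cs$k / ce$k) + q$k = - zv$k * phis" for k
    using arg_cong[OF m, of "\<lambda>x. x$k"] unfolding mu_def by simp
  have pw2: "(\<Sum>k\<in>UNIV. ce$k) - (\<Sum>k\<in>UNIV. cs$k) = A / vs" using pw unfolding pi_w_def by simp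
  have inS: "(cs, vs) \<in> Sbar zv z A" unfolding Sbar_def using cs vs con by (auto intro: less_imp_le)
  define D where "D = (\<lambda>c::real^'n. \<lambda>k. c$k * ln (c$k / cs$k) - c$k + cs$k)"
  have termk: "c$k * (ln (c$k / ce$k) - 1 + q$k) + ce$k = D c k - phis * (zv$k * c$k) + (ce$k - cs$k)"
    if "c$k \<ge> 0" for c k
  proof -
    have "c$k * ln (c$k / ce$k) = c$k * ln (c$k / cs$k) + c$k * ln (cs$k / ce$k)"
    proof (cases "c$k = 0")
      case False
      then have "c$k > 0" using that by simp
      have "cs$k > 0" "ce$k > 0" using cs ce_pos by auto
      then show ?thesis using \<open>c$k > 0\<close> by (simp add: ln_div distrib_left[symmetric])
    qed simp
    moreover have "c$k * (ln (cs$k / ce$k) + q$k) = c$k * (- zv$k * phis)" using lk[of k] by simp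
    ultimately show ?thesis unfolding D_def by (simp add: algebra_simps)
  qed
  have Geq: "Gt_c ce q A c v = v * (\<Sum>k\<in>UNIV. D c k) + phis * z * A + A * v / vs + A * (ln (A / v) - 1)"
    if "(c, v) \<in> Sbar zv z A" for c v
  proof -
    have c: "\<forall>k. c$k \<ge> 0" and v: "v > 0" and cc: "(\<Sum>k\<in>UNIV. zv$k * c$k) + z * A / v = 0"
      using that unfolding Sbar_def by auto
    have "(\<Sum>k\<in>UNIV. c$k * (ln (c$k / ce$k) - 1 + q$k) + ce$k)
       = (\<Sum>k\<in>UNIV. D c k - phis * (zv$k * c$k) + (ce$k - cs$k))"
      using termk c by (intro sum.cong) auto
    also have "\<dots> = (\<Sum>k\<in>UNIV. D c k) - phis * (\<Sum>k\<in>UNIV. zv$k * c$k) + A / vs"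
      using pw2 by (simp add: sum.distrib sum_subtractf sum_distrib_left)
    also have "\<dots> = (\<Sum>k\<in>UNIV. D c k) + phis * z * A / v + A / vs"
      using cc by (simp add: eq_neg_iff_add_eq_0[symmetric])
    finally have "v * (\<Sum>k\<in>UNIV. c$k * (ln (c$k / ce$k) - 1 + q$k) + ce$k)
       = v * (\<Sum>k\<in>UNIV. D c k) + phis * z * A + A * v / vs"
      using v by (simp add: algebra_simps)
    then show ?thesis unfolding Gt_c_def by simp
  qed
  have Dcs: "D cs k = 0" for k unfolding D_def using cs by simp
  have Ds: "D c k \<ge> 0" if "c$k \<ge> 0" for c k unfolding D_def using xlog_ge[OF that] cs by simp
  show ?thesis
  proof (intro conjI allI impI inS)
    fix c v assume h: "(c, v) \<in> Sbar zv z A \<and> (c, v) \<noteq> (cs, vs)"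
    have c: "\<forall>k. c$k \<ge> 0" and v: "v > 0" using h unfolding Sbar_def by auto
    have "Gt_c ce q A c v - Gt_c ce q A cs vs = v * (\<Sum>k\<in>UNIV. D c k) + A * (v / vs - 1 - ln (v / vs))"
      using Geq[OF inS] Geq[of c v] h Dcs v vs A_pos by (simp add: ln_div algebra_simps)
    moreover have "v * (\<Sum>k\<in>UNIV. D c k) + A * (v / vs - 1 - ln (v / vs)) > 0"
    proof (cases "v = vs")
      case True
      then have "c \<noteq> cs" using h by auto
      then obtain k where k: "c$k \<noteq> cs$k" by (auto simp: vec_eq_iff)
      have "D c k > 0" unfolding D_def using xlog_gt[of "c$k" "cs$k"] k c cs by simp
      moreover have "D c k \<le> (\<Sum>k\<in>UNIV. D c k)"
        by (rule member_le_sum) (use Ds c in auto)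
      ultimately have "(\<Sum>k\<in>UNIV. D c k) > 0" by linarith
      then show ?thesis using True vs by simp
    next
      case False
      have "A * (v / vs - 1 - ln (v / vs)) > 0" using mlog_gt[OF v vs False] A_pos by simp
      moreover have "(\<Sum>k\<in>UNIV. D c k) \<ge> 0" by (rule sum_nonneg) (use Ds c in auto)
      ultimately show ?thesis using v by (simp add: add_nonneg_pos)
    qed
    ultimately show "Gt_c ce q A cs vs < Gt_c ce q A c v" by linarith
  qed
qed

lemma bl_comp: "bounded_linear (\<lambda>h::(real^'n)\<times>real. fst h $ k)"
  by (rule bounded_linear_compose[OF bounded_linear_vec_nth bounded_linear_fst])

lemma dterm:
  fixes y :: "(real^'n)\<times>real" and c qk :: real
  assumes "fst y $ k > 0" "snd y > 0" "c > 0"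
  shows "((\<lambda>y. fst y $ k * (ln (fst y $ k / (snd y * c)) - 1 + qk) + snd y * c) has_derivative
     (\<lambda>h. (ln (fst y $ k) - ln (snd y) - ln c + qk) * fst h $ k + c * snd h - fst y $ k / snd y * snd h)) (at y)"
proof -
  have comp: "((\<lambda>y::(real^'n)\<times>real. fst y $ k) has_derivative (\<lambda>h. fst h $ k)) F" for F
    using bl_comp bounded_linear_imp_has_derivative by blast
  have l: "ln (fst y $ k / (snd y * c)) = ln (fst y $ k) - ln (snd y) - ln c"
    using assms by (simp add: ln_div ln_mult)
  show ?thesis
    apply (rule has_derivative_eq_rhs)
     apply (rule derivative_eq_intros comp refl | (use assms in \<open>simp; fail\<close>))+
    apply (rule ext)
    using assms unfolding l by (simp add: field_simps)
qed

lemma dAterm: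
  fixes y :: "(real^'n)\<times>real" and A :: real
  assumes "snd y > 0" "A > 0"
  shows "((\<lambda>y. A * (ln (A / snd y) - 1)) has_derivative (\<lambda>h. - A / snd y * snd h)) (at y)"
    apply (rule has_derivative_eq_rhs)
     apply (rule derivative_eq_intros refl | (use assms in \<open>simp; fail\<close>))+
    apply (rule ext)
    using assms by (simp add: field_simps)

lemma hess:
  fixes ce q a :: "real^'n" and A v :: real
  assumes ce_pos: "\<forall>k. ce$k > 0" and A_pos: "A > 0" and a: "\<forall>k. a$k > 0" and v: "v > 0"
  shows "hessian_pos_def_at (Gt_a ce q A) (a, v)"
proof -
  define P :: "'n \<Rightarrow> ((real^'n)\<times>real) \<Rightarrow>\<^sub>L real" where "P = (\<lambda>k. Blinfun (\<lambda>h. fst h $ k))"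
  define Pv :: "((real^'n)\<times>real) \<Rightarrow>\<^sub>L real" where "Pv = Blinfun snd"
  have P: "blinfun_apply (P k) h = fst h $ k" for k h
    unfolding P_def by (simp add: bounded_linear_Blinfun_apply[OF bl_comp])
  have Pv: "blinfun_apply Pv h = snd h" for h
    unfolding Pv_def by (simp add: bounded_linear_Blinfun_apply[OF bounded_linear_snd])
  define g where "g = (\<lambda>k (y::(real^'n)\<times>real). ln (fst y $ k) - ln (snd y) - ln (ce$k) + q$k)"
  define gv where "gv = (\<lambda>y::(real^'n)\<times>real. (\<Sum>k\<in>UNIV. ce$k) - ((\<Sum>k\<in>UNIV. fst y $ k) + A) / snd y)"
  define Df where "Df = (\<lambda>y. (\<Sum>k\<in>UNIV. g k y *\<^sub>R P k) + gv y *\<^sub>R Pv)"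
  define g' where "g' = (\<lambda>k (d::(real^'n)\<times>real). fst d $ k / a$k - snd d / v)"
  define gv' where "gv' = (\<lambda>d::(real^'n)\<times>real. - (\<Sum>k\<in>UNIV. fst d $ k) / v + ((\<Sum>k\<in>UNIV. a $ k) + A) * snd d / v^2)"
  define D2f where "D2f = (\<lambda>d. (\<Sum>k\<in>UNIV. g' k d *\<^sub>R P k) + gv' d *\<^sub>R Pv)"
  have Dapp: "blinfun_apply (Df y) h = (\<Sum>k\<in>UNIV. g k y * fst h $ k) + gv y * snd h" for y h
    unfolding Df_def by (simp add: blinfun.sum_left blinfun.add_left blinfun.scaleR_left P Pv)
  have D2app: "blinfun_apply (D2f d) h = (\<Sum>k\<in>UNIV. g' k d * fst h $ k) + gv' d * snd h" for d h
    unfolding D2f_def by (simp add: blinfun.sum_left blinfun.add_left blinfun.scaleR_left P Pv)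
  have comp: "((\<lambda>y::(real^'n)\<times>real. fst y $ k) has_derivative (\<lambda>h. fst h $ k)) F" for k F
    using bl_comp bounded_linear_imp_has_derivative by blast
  have D1: "(Gt_a ce q A has_derivative blinfun_apply (Df y)) (at y)"
    if y: "\<forall>k. fst y $ k > 0" "snd y > 0" for y
  proof -
    have e: "Gt_a ce q A = (\<lambda>y. (\<Sum>k\<in>UNIV. fst y $ k * (ln (fst y $ k / (snd y * ce$k)) - 1 + q$k) + snd y * ce$k)
         + A * (ln (A / snd y) - 1))" unfolding Gt_a_def Let_def by (simp add: fun_eq_iff)
    have "((\<lambda>y. (\<Sum>k\<in>UNIV. fst y $ k * (ln (fst y $ k / (snd y * ce$k)) - 1 + q$k) + snd y * ce$k)
         + A * (ln (A / snd y) - 1)) has_derivative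
        (\<lambda>h. (\<Sum>k\<in>UNIV. (ln (fst y $ k) - ln (snd y) - ln (ce$k) + q$k) * fst h $ k + ce$k * snd h - fst y $ k / snd y * snd h)
          + - A / snd y * snd h)) (at y)"
      by (intro has_derivative_add has_derivative_sum dterm dAterm) (use y ce_pos A_pos in auto)
    moreover have "(\<lambda>h. (\<Sum>k\<in>UNIV. (ln (fst y $ k) - ln (snd y) - ln (ce$k) + q$k) * fst h $ k + ce$k * snd h - fst y $ k / snd y * snd h)
          + - A / snd y * snd h) = blinfun_apply (Df y)"
    proof (rule ext)
      fix h :: "(real^'n)\<times>real"
      have "(\<Sum>k\<in>UNIV. (ln (fst y $ k) - ln (snd y) - ln (ce$k) + q$k) * fst h $ k + ce$k * snd h - fst y $ k / snd y * snd h)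
         = (\<Sum>k\<in>UNIV. g k y * fst h $ k) + (\<Sum>k\<in>UNIV. ce$k) * snd h - (\<Sum>k\<in>UNIV. fst y $ k) / snd y * snd h"
        unfolding g_def by (simp add: sum.distrib sum_subtractf sum_distrib_right sum_divide_distrib)
      moreover have "gv y * snd h = (\<Sum>k\<in>UNIV. ce$k) * snd h - (\<Sum>k\<in>UNIV. fst y $ k) / snd y * snd h - A / snd y * snd h"
        unfolding gv_def by (simp add: algebra_simps add_divide_distrib)
      ultimately show "(\<Sum>k\<in>UNIV. (ln (fst y $ k) - ln (snd y) - ln (ce$k) + q$k) * fst h $ k + ce$k * snd h - fst y $ k / snd y * snd h)
          + - A / snd y * snd h = blinfun_apply (Df y) h"
        unfolding Dapp by simp
    qed
    ultimately show ?thesis unfolding e by simp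
  qed
  have ev: "\<forall>\<^sub>F y in nhds (a, v). (Gt_a ce q A has_derivative blinfun_apply (Df y)) (at y)"
  proof -
    have "\<forall>\<^sub>F y in nhds (a, v). fst y $ k > 0" for k
    proof -
      have "((\<lambda>y::(real^'n)\<times>real. fst y $ k) \<longlongrightarrow> a $ k) (nhds (a, v))"
        using bounded_linear.tendsto[OF bl_comp[of k] filterlim_ident[of "nhds (a,v)"]] by simp
      then show ?thesis using a order_tendstoD(1) by blast
    qed
    then have 1: "\<forall>\<^sub>F y in nhds (a, v). \<forall>k. fst y $ k > 0" by (simp add: eventually_all_finite)
    have "((\<lambda>y::(real^'n)\<times>real. snd y) \<longlongrightarrow> v) (nhds (a, v))"
      using tendsto_snd[OF filterlim_ident[of "nhds (a,v)"]] by simp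
    then have 2: "\<forall>\<^sub>F y in nhds (a, v). snd y > 0" using v order_tendstoD(1) by blast
    show ?thesis using 1 2 by eventually_elim (rule D1, auto)
  qed
  have gk: "(g k has_derivative g' k) (at (a, v))" for k
    unfolding g_def g'_def
    apply (rule has_derivative_eq_rhs)
     apply (rule derivative_eq_intros comp refl | (use a v in \<open>simp; fail\<close>))+
    apply (rule ext)
    using a v by (simp add: field_simps)
  have gvd: "(gv has_derivative gv') (at (a, v))"
    unfolding gv_def gv'_def
    apply (rule has_derivative_eq_rhs)
     apply (rule derivative_eq_intros comp refl | (use a v in \<open>simp; fail\<close>))+
    apply (rule ext)
    using a v by (simp add: field_simps power2_eq_square)
  have D2: "(Df has_derivative D2f) (at (a, v))"
    unfolding Df_def
    apply (rule has_derivative_eq_rhs)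
     apply (rule has_derivative_add has_derivative_sum has_derivative_scaleR gk gvd has_derivative_const)+
    unfolding D2f_def by (simp add: fun_eq_iff)
  have pos: "blinfun_apply (D2f h) h > 0" if hne: "h \<noteq> 0" for h
  proof -
    obtain hh t where h: "h = (hh, t)" by (cases h)
    have pt: "g' k h * fst h $ k - fst h $ k * snd h / v + a$k * (snd h / v)^2 = a$k * (fst h $ k / a$k - snd h / v)^2" for k
    proof -
      have "a$k > 0" using a by simp
      then show ?thesis unfolding g'_def using v by (simp add: field_simps power2_eq_square)
    qed
    have "(\<Sum>k\<in>UNIV. a$k * (fst h $ k / a$k - snd h / v)^2)
       = (\<Sum>k\<in>UNIV. g' k h * fst h $ k - fst h $ k * snd h / v + a$k * (snd h / v)^2)"
      using pt by simp
    also have "\<dots> = (\<Sum>k\<in>UNIV. g' k h * fst h $ k) - (\<Sum>k\<in>UNIV. fst h $ k) * snd h / v + (\<Sum>k\<in>UNIV. a$k) * (snd h / v)^2"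
      by (simp add: sum.distrib sum_subtractf sum_distrib_right sum_divide_distrib)
    finally have S: "(\<Sum>k\<in>UNIV. a$k * (fst h $ k / a$k - snd h / v)^2)
       = (\<Sum>k\<in>UNIV. g' k h * fst h $ k) - (\<Sum>k\<in>UNIV. fst h $ k) * snd h / v + (\<Sum>k\<in>UNIV. a$k) * (snd h / v)^2" .
    have G: "gv' h * snd h = - (\<Sum>k\<in>UNIV. fst h $ k) * snd h / v + (\<Sum>k\<in>UNIV. a$k) * (snd h / v)^2 + A * (snd h / v)^2"
      unfolding gv'_def using v by (simp add: field_simps power2_eq_square)
    have e: "blinfun_apply (D2f h) h = (\<Sum>k\<in>UNIV. a$k * (fst h $ k / a$k - snd h / v)^2) + A * (snd h / v)^2"
      unfolding D2app S using G by simp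
    have tn: "a$k * (fst h $ k / a$k - snd h / v)^2 \<ge> 0" for k
      using a[rule_format, of k] by simp
    have nn: "(\<Sum>k\<in>UNIV. a$k * (fst h $ k / a$k - snd h / v)^2) \<ge> 0"
      by (rule sum_nonneg) (use tn in auto)
    show ?thesis
    proof (cases "t = 0")
      case False
      then have "A * (snd h / v)^2 > 0" using h v A_pos by simp
      then show ?thesis using e nn by linarith
    next
      case True
      then have "hh \<noteq> 0" using hne h by (auto simp: zero_prod_def)
      then obtain k where k: "hh $ k \<noteq> 0" by (auto simp: vec_eq_iff)
      have "a$k * (fst h $ k / a$k - snd h / v)^2 > 0" using a[rule_format, of k] k h True by simp
      moreover have "a$k * (fst h $ k / a$k - snd h / v)^2 \<le> (\<Sum>k\<in>UNIV. a$k * (fst h $ k / a$k - snd h / v)^2)"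
        by (rule member_le_sum) (use tn in auto)
      ultimately show ?thesis using e A_pos by (simp add: True h)
    qed
  qed
  show ?thesis unfolding hessian_pos_def_at_def using ev D2 pos by blast
qed


theorem lemma4:
  fixes zv ce p :: "real^'n" and L :: "real^'n^'n"
    and A z zeta phi_min :: real
  assumes N2: "CARD('n) \<ge> 2"
    and z_nz: "\<exists>k. zv$k \<noteq> 0"
    and ce_pos: "\<forall>k. ce$k > 0"
    and electroneutral: "(\<Sum>k\<in>UNIV. zv$k * ce$k) = 0"
    and A_pos: "A > 0"
    and L_sym: "transpose L = L"
    and L_pd: "\<forall>x. x \<noteq> 0 \<longrightarrow> x \<bullet> (L *v x) > 0"
    and zeta_pos: "zeta > 0"
  defines "q \<equiv> matrix_inv L *v p"
  shows
    "(\<forall>a v. (\<forall>k. a$k > 0) \<and> v > 0 \<longrightarrow> hessian_pos_def_at (Gt_a ce q A) (a, v)) \<and>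
     convex_on {(a, v). (\<forall>k. a$k \<ge> 0) \<and> v > 0} (Gt_a ce q A) \<and>
     (\<forall>cs vs phis.
        (\<forall>psi. f_fun zv ce q phi_min \<le> f_fun zv ce q psi) \<longrightarrow>
        f_fun zv ce q phi_min < 0 \<longrightarrow>
        steady_state zv ce A z L p cs vs phis \<longrightarrow>
        (cs, vs) \<in> Sbar zv z A \<and>
        (\<forall>c v. (c, v) \<in> Sbar zv z A \<and> (c, v) \<noteq> (cs, vs) \<longrightarrow>
                Gt_c ce q A cs vs < Gt_c ce q A c v))"
proof (intro conjI allI impI)
  fix a :: "real^'n" and v :: real
  assume "(\<forall>k. a$k > 0) \<and> v > 0"
  then show "hessian_pos_def_at (Gt_a ce q A) (a, v)" using hess ce_pos A_pos by blast
next
  show "convex_on {(a, v). (\<forall>k. a$k \<ge> 0) \<and> v > 0} (Gt_a ce q A)"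
    using convex_Gt ce_pos A_pos by blast
next
  fix cs vs phis
  assume ss: "steady_state zv ce A z L p cs vs phis"
  show "(cs, vs) \<in> Sbar zv z A" using part2[OF ce_pos A_pos L_pd meta_eq_to_obj_eq[OF q_def] ss] by blast
  show "\<And>c v. (c, v) \<in> Sbar zv z A \<and> (c, v) \<noteq> (cs, vs) \<Longrightarrow> Gt_c ce q A cs vs < Gt_c ce q A c v"
    using part2[OF ce_pos A_pos L_pd meta_eq_to_obj_eq[OF q_def] ss] by blast
qed

end
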